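(* Let $(n^{-*},n^{+*})$ be a global optimum of $\max\{\Phi(n^-,n^+): n^-,n^+\in\mathbb{N}\cup\{0\},\ n^-+n^+=N\}$ and suppose the optimal value $\Phi^*=\Phi(n^{-*},n^{+*})$ is positive. Then for every global optimum $(w^{-*},w^{+*})$ of problem $P(n^{-*},n^{+*})$ we have $w^{-*}_i\ne 0$ for all $i\in\{1,\dots,n^{-*}\}$ and $w^{+*}_j\ne 0$ for all $j\in\{1,\dots,n^{+*}\}$.
   Context: Lottery with $N\in\mathbb{N}$ tickets, each outcome having probability $1/N$. Parameters $\alpha,\beta\in(0,1)$, $\lambda>0$; value function $U(x)=x^\alpha$ for $x\ge0$ and $U(x)=-\lambda(-x)^\beta$ for $x<0$. A function $f:[0,1]\to\mathbb{R}$ is inverse S-shaped if it is strictly increasing, continuously differentiable, and there is $x_0\in[0,1]$ such that $f'$ is strictly decreasing on $[0,x_0]$ and strictly increasing on $[x_0,1]$; $W^+,W^-:[0,1]\to[0,1]$ are inverse S-shaped with value $0$ at $0$ and $1$ at $1$. For $n^-+n^+=N$, set $h^-_i=W^-(i/N)-W^-((i-1)/N)$ ($i\le n^-$) and $h^+_j=W^+((n^+-j+1)/N)-W^+((n^+-j)/N)$ ($j\le n^+$). Problem $P(n^-,n^+)$: maximize $\sum_{i=1}^{n^-}(-w^-_i)-\sum_{j=1}^{n^+}w^+_j$ over $w^-\in\mathbb{R}^{n^-}$, $w^+\in\mathbb{R}^{n^+}$ subject to $\sum_{i=1}^{n^-}h^-_iU(w^-_i)+\sum_{j=1}^{n^+}h^+_jU(w^+_j)\ge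 0$, $0\le w^+_1\le\cdots\le w^+_{n^+}$, and $w^-_1\le\cdots\le w^-_{n^-}\le 0$. $\Phi(n^-,n^+)$ denotes its optimal value (with $\Phi(0,N)=\Phi(N,0)=0$). *)

theory Defs
  imports "HOL-Analysis.Analysis"
begin

definition U :: "real \<Rightarrow> real \<Rightarrow> real \<Rightarrow> real \<Rightarrow> real" where
  "U alpha beta lam x = (if x \<ge> 0 then x powr alpha else - lam * ((- x) powr beta))"

definition inverse_S_shaped :: "(real \<Rightarrow> real) \<Rightarrow> bool" where
  "inverse_S_shaped f \<longleftrightarrow>
     strict_mono_on {0..1} f \<and>
     (\<exists>f'. (\<forall>x\<in>{0..1}. (f has_real_derivative f' x) (at x within {0..1})) \<and>
           continuous_on {0..1} f' \<and>
           (\<exists>x0\<in>{0..1}.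
              (\<forall>x\<in>{0..x0}. \<forall>y\<in>{0..x0}. x < y \<longrightarrow> f' y < f' x) \<and>
              (\<forall>x\<in>{x0..1}. \<forall>y\<in>{x0..1}. x < y \<longrightarrow> f' x < f' y)))"

definition hm :: "(real \<Rightarrow> real) \<Rightarrow> nat \<Rightarrow> nat \<Rightarrow> real" where
  "hm Wm N i = Wm (real i / real N) - Wm ((real i - 1) / real N)"

definition hp :: "(real \<Rightarrow> real) \<Rightarrow> nat \<Rightarrow> nat \<Rightarrow> nat \<Rightarrow> real" where
  "hp Wp N np j = Wp ((real np - real j + 1) / real N) - Wp ((real np - real j) / real N)"

text \<open>Vectors w^- in R^{nm}, w^+ in R^{np} are represented as functions on nat,
  only the entries 1..nm resp. 1..np being relevant.\<close>
definition objective :: "nat \<Rightarrow> nat \<Rightarrow> (nat \<Rightarrow> real) \<Rightarrow> (nat \<Rightarrow> real) \<Rightarrow> real" where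
  "objective nm np wm wp = (\<Sum>i=1..nm. - wm i) - (\<Sum>j=1..np. wp j)"

definition feasible ::
  "real \<Rightarrow> real \<Rightarrow> real \<Rightarrow> (real \<Rightarrow> real) \<Rightarrow> (real \<Rightarrow> real) \<Rightarrow> nat \<Rightarrow> nat \<Rightarrow> nat
   \<Rightarrow> (nat \<Rightarrow> real) \<Rightarrow> (nat \<Rightarrow> real) \<Rightarrow> bool" where
  "feasible alpha beta lam Wm Wp N nm np wm wp \<longleftrightarrow>
     (\<Sum>i=1..nm. hm Wm N i * U alpha beta lam (wm i)) +
     (\<Sum>j=1..np. hp Wp N np j * U alpha beta lam (wp j)) \<ge> 0 \<and>
     (np \<ge> 1 \<longrightarrow> 0 \<le> wp 1) \<and>
     (\<forall>j\<in>{1..<np}. wp j \<le> wp (j + 1)) \<and>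
     (\<forall>i\<in>{1..<nm}. wm i \<le> wm (i + 1)) \<and>
     (nm \<ge> 1 \<longrightarrow> wm nm \<le> 0)"

definition is_opt_P ::
  "real \<Rightarrow> real \<Rightarrow> real \<Rightarrow> (real \<Rightarrow> real) \<Rightarrow> (real \<Rightarrow> real) \<Rightarrow> nat \<Rightarrow> nat \<Rightarrow> nat
   \<Rightarrow> (nat \<Rightarrow> real) \<Rightarrow> (nat \<Rightarrow> real) \<Rightarrow> bool" where
  "is_opt_P alpha beta lam Wm Wp N nm np wm wp \<longleftrightarrow>
     feasible alpha beta lam Wm Wp N nm np wm wp \<and>
     (\<forall>vm vp. feasible alpha beta lam Wm Wp N nm np vm vp \<longrightarrow>
        objective nm np vm vp \<le> objective nm np wm wp)"

definition Phi ::
  "real \<Rightarrow> real \<Rightarrow> real \<Rightarrow> (real \<Rightarrow> real) \<Rightarrow> (real \<Rightarrow> real) \<Rightarrow> nat \<Rightarrow> nat \<Rightarrow> nat \<Rightarrow> real" where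
  "Phi alpha beta lam Wm Wp N nm np =
     (if nm = 0 \<or> np = 0 then 0
      else Sup {objective nm np wm wp | wm wp. feasible alpha beta lam Wm Wp N nm np wm wp})"

end

theory Submission
  imports Defs
begin

lemma powr_subadd:
  fixes x y b :: real
  assumes "0 \<le> x" "0 \<le> y" "0 < b" "b \<le> 1"
  shows "(x+y) powr b \<le> x powr b + y powr b"
proof (cases "x + y = 0")
  case True then show ?thesis using assms by auto
next
  case False
  hence s: "x + y > 0" using assms by auto
  have "x/(x+y) \<le> (x/(x+y)) powr b"
    using powr_mono'[of b 1 "x/(x+y)"] assms s by auto
  moreover have "y/(x+y) \<le> (y/(x+y)) powr b"
    using powr_mono'[of b 1 "y/(x+y)"] assms s by auto
  moreover have "x/(x+y) + y/(x+y) = 1" using s by (simp add: add_divide_distrib[symmetric])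
  ultimately have "1 \<le> (x/(x+y)) powr b + (y/(x+y)) powr b"
    by linarith
  hence "(x+y) powr b * 1 \<le> (x+y) powr b * ((x/(x+y)) powr b + (y/(x+y)) powr b)"
    by (intro mult_left_mono) auto
  also have "\<dots> = x powr b + y powr b"
    using s assms by (simp add: powr_divide distrib_left)
  finally show ?thesis by simp
qed

lemma chain_mono:
  fixes f :: "nat \<Rightarrow> real"
  assumes "\<forall>i\<in>{1..<a}. f i \<le> f (i+1)" "1 \<le> i" "i \<le> j" "j \<le> a"
  shows "f i \<le> f j"
  using assms(3,4)
proof (induction j)
  case 0 then show ?case using assms(2) by simp
next
  case (Suc j)
  show ?case
  proof (cases "i = Suc j")
    case True then show ?thesis by simp
  next
    case False
    hence "i \<le> j" using Suc by simp
    hence "f i \<le> f j" using Suc by simp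
    moreover have "f j \<le> f (j+1)" using assms(1) Suc.prems \<open>i \<le> j\<close> assms(2) by auto
    ultimately show ?thesis by simp
  qed
qed

lemma U_nonneg: "0 \<le> x \<Longrightarrow> U a b l x = x powr a"
  by (simp add: U_def)
lemma U_neg: "x < 0 \<Longrightarrow> U a b l x = - l * ((-x) powr b)"
  by (simp add: U_def)
lemma U_nonpos: "x \<le> 0 \<Longrightarrow> U a b l x = - l * ((-x) powr b)"
  by (simp add: U_def)

lemma hm_pos:
  assumes "strict_mono_on {0..1} W" "1 \<le> i" "i \<le> N"
  shows "hm W N i > 0"
proof -
  have "(real i - 1) / real N < real i / real N" using assms by (simp add: divide_strict_right_mono)
  moreover have "(real i - 1) / real N \<in> {0..1}" "real i / real N \<in> {0..1}" using assms by auto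
  ultimately show ?thesis unfolding hm_def using assms(1) by (auto simp: strict_mono_on_def)
qed

lemma hm_le1:
  assumes "\<forall>x\<in>{0..1}. W x \<in> {0..1}" "1 \<le> i" "i \<le> N"
  shows "hm W N i \<le> 1"
proof -
  have "(real i - 1) / real N \<in> {0..1}" "real i / real N \<in> {0..1}" using assms by auto
  then have "W (real i / real N) \<le> 1" "W ((real i - 1) / real N) \<ge> 0" using assms(1) by auto
  then show ?thesis unfolding hm_def by linarith
qed

lemma hp_pos:
  assumes "strict_mono_on {0..1} W" "1 \<le> j" "j \<le> np" "np \<le> N"
  shows "hp W N np j > 0"
proof -
  have "(real np - real j) / real N < (real np - real j + 1) / real N" using assms by (simp add: divide_strict_right_mono)
  moreover have "(real np - real j) / real N \<in> {0..1}" "(real np - real j + 1) / real N \<in> {0..1}" using assms by auto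
  ultimately show ?thesis unfolding hp_def using assms(1) by (auto simp: strict_mono_on_def)
qed

lemma hp_le1:
  assumes "\<forall>x\<in>{0..1}. W x \<in> {0..1}" "1 \<le> j" "j \<le> np" "np \<le> N"
  shows "hp W N np j \<le> 1"
proof -
  have "(real np - real j) / real N \<in> {0..1}" "(real np - real j + 1) / real N \<in> {0..1}" using assms by auto
  then have "W ((real np - real j + 1) / real N) \<le> 1" "W ((real np - real j) / real N) \<ge> 0" using assms(1) by auto
  then show ?thesis unfolding hp_def by linarith
qed


lemma sum_split1:
  fixes f :: "nat \<Rightarrow> real"
  assumes "a \<ge> 1"
  shows "(\<Sum>i=1..a. f i) = f 1 + (\<Sum>i\<in>{1..a}-{1}. f i)"
  using assms by (subst sum.remove[of _ 1]) auto

lemma improve: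
  fixes alpha beta lam :: real and a b :: nat
  assumes ab: "0 < alpha" "alpha < beta" "beta < 1" "lam > 0"
   and a: "a \<ge> 1" and b: "b \<ge> 1"
   and G: "hm Wm N 1 > 0" and H: "hp Wp N b 1 > 0"
   and hmnn: "\<forall>i\<in>{1..a}. hm Wm N i \<ge> 0" and hpnn: "\<forall>j\<in>{1..b}. hp Wp N b j \<ge> 0"
   and F: "feasible alpha beta lam Wm Wp N a b um up" and z: "up 1 = 0"
  shows "\<exists>vm vp. feasible alpha beta lam Wm Wp N a b vm vp \<and>
                 objective a b vm vp > objective a b um up"
proof -
  define g where "g = hm Wm N 1"
  define h where "h = hp Wp N b 1"
  have g: "g > 0" and h: "h > 0" using G H by (auto simp: g_def h_def)
  define c where "c = (h/(lam*g)) powr (1/beta)"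
  have c: "c > 0" using g h ab by (simp add: c_def)
  define s where "s = (c/(2*b)) powr (1/(beta-alpha))"
  have s: "s > 0" using c b by (simp add: s_def)
  define eps where "eps = s powr beta"
  define del where "del = c * s powr alpha"
  have eps: "eps > 0" using s by (simp add: eps_def)
  have del: "del > 0" using s c by (simp add: del_def)
  have k1: "lam * g * del powr beta = h * eps powr alpha"
  proof -
    have "del powr beta = c powr beta * s powr (alpha*beta)"
      using s c by (simp add: del_def powr_mult powr_powr)
    also have "c powr beta = h/(lam*g)" using g h ab by (simp add: c_def powr_powr)
    finally have "del powr beta = h/(lam*g) * s powr (alpha*beta)" .
    moreover have "eps powr alpha = s powr (alpha*beta)" using s by (simp add: eps_def powr_powr mult.commute)
    ultimately show ?thesis using g ab by simp
  qed
  have k2: "real b * eps < del"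
  proof -
    have "s powr (beta - alpha) = c/(2*b)" using s c b ab by (simp add: s_def powr_powr)
    moreover have "eps = s powr (beta - alpha) * s powr alpha" using s by (simp add: eps_def powr_add[symmetric])
    ultimately have "real b * eps = c/2 * s powr alpha" using b by simp
    also have "\<dots> < c * s powr alpha" using c s by simp
    finally show ?thesis by (simp add: del_def)
  qed
  define vp where "vp = (\<lambda>l. max (up l) eps)"
  define vm where "vm = um(1 := um 1 - del)"
  note Fd = F[unfolded feasible_def]
  have up_nn: "up j \<ge> 0" if "j \<in> {1..b}" for j
    using chain_mono[of b up 1 j] Fd z that by auto
  have um1: "um 1 \<le> 0"
    using chain_mono[of a um 1 a] Fd a by auto
  have Sm: "(\<Sum>i=1..a. hm Wm N i * U alpha beta lam (vm i)) =
        (\<Sum>i=1..a. hm Wm N i * U alpha beta lam (um i)) + g * (U alpha beta lam (um 1 - del) - U alpha beta lam (um 1))"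
  proof -
    have "(\<Sum>i\<in>{1..a}-{1}. hm Wm N i * U alpha beta lam (vm i)) = (\<Sum>i\<in>{1..a}-{1}. hm Wm N i * U alpha beta lam (um i))"
      by (rule sum.cong) (auto simp: vm_def)
    moreover have "(\<Sum>i=1..a. hm Wm N i * U alpha beta lam (vm i)) = hm Wm N 1 * U alpha beta lam (vm 1) + (\<Sum>i\<in>{1..a}-{1}. hm Wm N i * U alpha beta lam (vm i))"
      by (rule sum_split1[OF a])
    moreover have "(\<Sum>i=1..a. hm Wm N i * U alpha beta lam (um i)) = hm Wm N 1 * U alpha beta lam (um 1) + (\<Sum>i\<in>{1..a}-{1}. hm Wm N i * U alpha beta lam (um i))"
      by (rule sum_split1[OF a])
    moreover have "U alpha beta lam (vm 1) = U alpha beta lam (um 1 - del)" by (simp add: vm_def)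
    ultimately show ?thesis by (simp add: g_def right_diff_distrib)
  qed
  have Ud: "U alpha beta lam (um 1 - del) - U alpha beta lam (um 1) \<ge> - lam * del powr beta"
  proof -
    have "(-um 1 + del) powr beta \<le> (-um 1) powr beta + del powr beta"
      using powr_subadd[of "-um 1" del beta] um1 del ab by auto
    hence "lam * (-um 1 + del) powr beta \<le> lam * ((-um 1) powr beta + del powr beta)"
      using ab by (intro mult_left_mono) auto
    then show ?thesis using um1 del ab by (simp add: U_nonpos algebra_simps)
  qed
  have Sp: "(\<Sum>j=1..b. hp Wp N b j * U alpha beta lam (vp j)) \<ge>
        (\<Sum>j=1..b. hp Wp N b j * U alpha beta lam (up j)) + h * eps powr alpha"
  proof -
    have "(\<Sum>j\<in>{1..b}-{1}. hp Wp N b j * U alpha beta lam (up j)) \<le> (\<Sum>j\<in>{1..b}-{1}. hp Wp N b j * U alpha beta lam (vp j))"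
    proof (rule sum_mono)
      fix j assume j: "j \<in> {1..b}-{1}"
      have "up j \<ge> 0" using up_nn j by auto
      hence "U alpha beta lam (up j) \<le> U alpha beta lam (vp j)"
        using ab eps by (auto simp: U_nonneg vp_def intro!: powr_mono2)
      then show "hp Wp N b j * U alpha beta lam (up j) \<le> hp Wp N b j * U alpha beta lam (vp j)"
        using hpnn j by (auto intro: mult_left_mono)
    qed
    moreover have "U alpha beta lam (vp 1) = eps powr alpha" using z eps by (simp add: vp_def U_nonneg)
    moreover have "U alpha beta lam (up 1) = 0" using z by (simp add: U_nonneg)
    moreover have "(\<Sum>j=1..b. hp Wp N b j * U alpha beta lam (vp j)) = hp Wp N b 1 * U alpha beta lam (vp 1) + (\<Sum>j\<in>{1..b}-{1}. hp Wp N b j * U alpha beta lam (vp j))"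
      by (rule sum_split1[OF b])
    moreover have "(\<Sum>j=1..b. hp Wp N b j * U alpha beta lam (up j)) = hp Wp N b 1 * U alpha beta lam (up 1) + (\<Sum>j\<in>{1..b}-{1}. hp Wp N b j * U alpha beta lam (up j))"
      by (rule sum_split1[OF b])
    ultimately show ?thesis by (simp add: h_def)
  qed
  have feas: "feasible alpha beta lam Wm Wp N a b vm vp"
    unfolding feasible_def
  proof (intro conjI)
    have "g * (U alpha beta lam (um 1 - del) - U alpha beta lam (um 1)) \<ge> g * (- lam * del powr beta)"
      using Ud g by (intro mult_left_mono) auto
    then show "0 \<le> (\<Sum>i = 1..a. hm Wm N i * U alpha beta lam (vm i)) +
         (\<Sum>j = 1..b. hp Wp N b j * U alpha beta lam (vp j))"
      using Sm Sp k1 Fd by (simp add: algebra_simps)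
    show "1 \<le> b \<longrightarrow> 0 \<le> vp 1" using eps by (simp add: vp_def le_max_iff_disj)
    show "\<forall>j\<in>{1..<b}. vp j \<le> vp (j + 1)" using Fd by (auto simp: vp_def)
    show "\<forall>i\<in>{1..<a}. vm i \<le> vm (i + 1)"
    proof
      fix i assume i: "i \<in> {1..<a}"
      have "um i \<le> um (i+1)" using Fd i by blast
      moreover have "vm (i+1) = um (i+1)" using i by (simp add: vm_def)
      moreover have "vm i \<le> um i" using del by (simp add: vm_def)
      ultimately show "vm i \<le> vm (i + 1)" by linarith
    qed
    show "1 \<le> a \<longrightarrow> vm a \<le> 0" using Fd del um1 by (auto simp: vm_def)
  qed
  have o1: "(\<Sum>i=1..a. - vm i) = (\<Sum>i=1..a. - um i) + del"
  proof -
    have "(\<Sum>i\<in>{1..a}-{1}. - vm i) = (\<Sum>i\<in>{1..a}-{1}. - um i)"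
      by (rule sum.cong) (auto simp: vm_def)
    moreover have "(\<Sum>i=1..a. - vm i) = - vm 1 + (\<Sum>i\<in>{1..a}-{1}. - vm i)"
      by (rule sum_split1[OF a])
    moreover have "(\<Sum>i=1..a. - um i) = - um 1 + (\<Sum>i\<in>{1..a}-{1}. - um i)"
      by (rule sum_split1[OF a])
    moreover have "vm 1 = um 1 - del" by (simp add: vm_def)
    ultimately show ?thesis by linarith
  qed
  have o2: "(\<Sum>j=1..b. vp j) \<le> (\<Sum>j=1..b. up j + eps)"
    by (rule sum_mono) (use up_nn eps in \<open>auto simp: vp_def\<close>)
  have "objective a b vm vp > objective a b um up"
    using o1 o2 k2 by (simp add: objective_def sum.distrib)
  then show ?thesis using feas by blast
qed


lemma bdd:
  fixes alpha beta lam :: real and a b N :: nat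
  assumes ab: "0 < alpha" "alpha < beta" "lam > 0"
   and a: "a \<ge> 1" and b: "b \<ge> 1" and N: "a + b \<le> N"
   and G: "hm Wm N 1 > 0"
   and hmnn: "\<forall>i\<in>{1..a}. hm Wm N i \<ge> 0" and hpnn: "\<forall>j\<in>{1..b}. hp Wp N b j \<ge> 0"
   and hple: "\<forall>j\<in>{1..b}. hp Wp N b j \<le> 1"
  shows "bdd_above {objective a b vm vp | vm vp. feasible alpha beta lam Wm Wp N a b vm vp}"
proof -
  define g where "g = hm Wm N 1"
  have g: "g > 0" using G by (simp add: g_def)
  have Npos: "real N > 0" using a N by simp
  define C where "C = real N powr (1+alpha) / (lam*g)"
  define K where "K = C powr (1/(beta-alpha))"
  have K: "K \<ge> 0" by (simp add: K_def)
  show ?thesis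
  proof (rule bdd_aboveI[where M = "real N * K"], clarify)
    fix vm vp assume F: "feasible alpha beta lam Wm Wp N a b vm vp"
    note Fd = F[unfolded feasible_def]
    define M where "M = - vm 1"
    define W where "W = vp b"
    have vmi: "vm 1 \<le> vm i" "vm i \<le> 0" if "i \<in> {1..a}" for i
      using chain_mono[of a vm 1 i] chain_mono[of a vm i a] Fd that by auto
    have vpj: "0 \<le> vp j" "vp j \<le> W" if "j \<in> {1..b}" for j
      using chain_mono[of b vp 1 j] chain_mono[of b vp j b] Fd that by (auto simp: W_def)
    have M: "M \<ge> 0" using vmi[of 1] a by (simp add: M_def)
    have W: "W \<ge> 0" using vpj[of b] b by simp
    have s1: "(\<Sum>i=1..a. - vm i) \<le> real N * M"
    proof -
      have "(\<Sum>i=1..a. - vm i) \<le> real (card {1..a}) * M"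
        by (rule sum_bounded_above) (use vmi in \<open>auto simp: M_def\<close>)
      also have "\<dots> \<le> real N * M" using N M by (intro mult_right_mono) auto
      finally show ?thesis .
    qed
    have s2: "W \<le> (\<Sum>j=1..b. vp j)"
      unfolding W_def by (rule member_le_sum) (use vpj b in auto)
    have s3: "(\<Sum>j=1..b. hp Wp N b j * U alpha beta lam (vp j)) \<le> real N * W powr alpha"
    proof -
      have "(\<Sum>j=1..b. hp Wp N b j * U alpha beta lam (vp j)) \<le> real (card {1..b}) * W powr alpha"
      proof (rule sum_bounded_above)
        fix j assume j: "j \<in> {1..b}"
        have "U alpha beta lam (vp j) = vp j powr alpha" using vpj j by (simp add: U_nonneg)
        moreover have "vp j powr alpha \<le> W powr alpha" using vpj j ab by (intro powr_mono2) auto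
        ultimately show "hp Wp N b j * U alpha beta lam (vp j) \<le> W powr alpha"
          using hpnn hple j mult_mono[of "hp Wp N b j" 1 "vp j powr alpha" "W powr alpha"] by auto
      qed
      also have "\<dots> \<le> real N * W powr alpha" using N by (intro mult_right_mono) auto
      finally show ?thesis .
    qed
    have s4: "(\<Sum>i=1..a. hm Wm N i * U alpha beta lam (vm i)) \<le> - lam * g * M powr beta"
    proof -
      have "(\<Sum>i\<in>{1..a}-{1}. hm Wm N i * U alpha beta lam (vm i)) \<le> 0"
      proof (rule sum_nonpos)
        fix i assume i: "i \<in> {1..a}-{1}"
        have "U alpha beta lam (vm i) \<le> 0" using vmi[of i] i ab by (simp add: U_nonpos)
        then show "hm Wm N i * U alpha beta lam (vm i) \<le> 0" using hmnn i
          by (simp add: mult_nonneg_nonpos)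
      qed
      moreover have "(\<Sum>i=1..a. hm Wm N i * U alpha beta lam (vm i)) = hm Wm N 1 * U alpha beta lam (vm 1) + (\<Sum>i\<in>{1..a}-{1}. hm Wm N i * U alpha beta lam (vm i))"
        by (rule sum_split1[OF a])
      moreover have "U alpha beta lam (vm 1) = - lam * M powr beta" using M by (simp add: U_nonpos M_def)
      ultimately show ?thesis by (simp add: g_def)
    qed
    have key: "lam * g * M powr beta \<le> real N * W powr alpha"
      using s3 s4 Fd by linarith
    have obj: "objective a b vm vp \<le> real N * M - W"
      using s1 s2 by (simp add: objective_def)
    show "objective a b vm vp \<le> real N * K"
    proof (cases "W \<ge> real N * M")
      case True then show ?thesis using obj K Npos by (smt (verit) mult_nonneg_nonneg)
    next
      case False
      hence Mp: "M > 0" using W Npos M by (cases "M = 0") auto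
      have "W powr alpha \<le> (real N * M) powr alpha" using False W ab by (intro powr_mono2) auto
      also have "\<dots> = real N powr alpha * M powr alpha" using Npos M by (simp add: powr_mult)
      finally have "lam * g * M powr beta \<le> real N * (real N powr alpha * M powr alpha)"
        using key Npos by (smt (verit) mult_left_mono)
      also have "\<dots> = real N powr (1+alpha) * M powr alpha" using Npos by (simp add: powr_add)
      finally have e1: "lam * g * M powr beta \<le> real N powr (1+alpha) * M powr alpha" .
      have "M powr beta = M powr (beta - alpha) * M powr alpha" using Mp by (simp add: powr_add[symmetric])
      with e1 have "(lam * g * M powr (beta-alpha)) * M powr alpha \<le> real N powr (1+alpha) * M powr alpha"
        by (simp add: mult.assoc)
      hence "lam * g * M powr (beta-alpha) \<le> real N powr (1+alpha)"
        using Mp by (simp add: mult_le_cancel_right)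
      hence e2: "M powr (beta-alpha) \<le> C" using ab g by (simp add: C_def field_simps)
      have "M = (M powr (beta-alpha)) powr (1/(beta-alpha))" using Mp ab by (simp add: powr_powr)
      also have "\<dots> \<le> K" unfolding K_def using e2 ab by (intro powr_mono2) auto
      finally have "M \<le> K" .
      hence "real N * M \<le> real N * K" using Npos by simp
      then show ?thesis using obj W by linarith
    qed
  qed
qed


lemma U_scale_neg:
  assumes "x \<le> 0" "0 < beta"
  shows "U alpha beta lam (2 powr (1/beta) * x) = 2 * U alpha beta lam x"
proof -
  have "2 powr (1/beta) * x \<le> 0" using assms by (simp add: mult_nonneg_nonpos)
  moreover have "(2 powr (1/beta) * (-x)) powr beta = 2 * (-x) powr beta"
    using assms by (subst powr_mult) (auto simp: powr_powr)
  moreover have "- (2 powr (1/beta) * x) = 2 powr (1/beta) * (-x)" by simp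
  ultimately show ?thesis using assms by (simp only: U_nonpos)
qed

lemma U_scale_pos:
  assumes "x \<ge> 0" "0 < alpha"
  shows "U alpha beta lam (2 powr (1/alpha) * x) = 2 * U alpha beta lam x"
proof -
  have "2 powr (1/alpha) * x \<ge> 0" using assms by simp
  moreover have "(2 powr (1/alpha) * x) powr alpha = 2 * x powr alpha"
    using assms by (simp add: powr_mult powr_powr)
  ultimately show ?thesis using assms by (simp add: U_nonneg)
qed

lemma S_strict: "inverse_S_shaped f \<Longrightarrow> strict_mono_on {0..1} f"
  by (simp add: inverse_S_shaped_def)

theorem proposition1:
  fixes alpha beta lam :: real and Wm Wp :: "real \<Rightarrow> real" and N nms nps :: nat
    and wm wp :: "nat \<Rightarrow> real"
  assumes N: "N \<ge> 1"
    and alpha: "0 < alpha" "alpha < 1" and beta: "0 < beta" "beta < 1" and lam: "lam > 0"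
    and Wp: "inverse_S_shaped Wp" "Wp 0 = 0" "Wp 1 = 1" "\<forall>x\<in>{0..1}. Wp x \<in> {0..1}"
    and Wm: "inverse_S_shaped Wm" "Wm 0 = 0" "Wm 1 = 1" "\<forall>x\<in>{0..1}. Wm x \<in> {0..1}"
    and sum: "nms + nps = N"
    and glob: "\<forall>a b. a + b = N \<longrightarrow>
                 Phi alpha beta lam Wm Wp N a b \<le> Phi alpha beta lam Wm Wp N nms nps"
    and pos: "Phi alpha beta lam Wm Wp N nms nps > 0"
    and opt: "is_opt_P alpha beta lam Wm Wp N nms nps wm wp"
  shows "(\<forall>i\<in>{1..nms}. wm i \<noteq> 0) \<and> (\<forall>j\<in>{1..nps}. wp j \<noteq> 0)"
proof -
  have smm: "strict_mono_on {0..1} Wm" and smp: "strict_mono_on {0..1} Wp"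
    using Wm Wp S_strict by auto
  have nms: "nms \<ge> 1" and nps: "nps \<ge> 1"
    using pos by (auto simp: Phi_def split: if_splits)
  define Ov where "Ov = objective nms nps wm wp"
  have Fw: "feasible alpha beta lam Wm Wp N nms nps wm wp"
    and maxw: "\<And>vm vp. feasible alpha beta lam Wm Wp N nms nps vm vp \<Longrightarrow> objective nms nps vm vp \<le> Ov"
    using opt by (auto simp: is_opt_P_def Ov_def)
  note Fwd = Fw[unfolded feasible_def]
  have PhiO: "Phi alpha beta lam Wm Wp N nms nps = Ov"
    unfolding Phi_def using nms nps
    by (auto intro!: cSup_eq_maximum simp: Ov_def) (use Fw maxw Ov_def in blast)+
  have Ov: "Ov > 0" using pos PhiO by simp
  have wmi: "wm 1 \<le> wm i" "wm i \<le> wm nms" "wm i \<le> 0" if "i \<in> {1..nms}" for i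
    using chain_mono[of nms wm 1 i] chain_mono[of nms wm i nms] Fwd that by auto
  have wpj: "0 \<le> wp j" if "j \<in> {1..nps}" for j
    using chain_mono[of nps wp 1 j] Fwd that by auto
  have hmpos: "hm Wm N i > 0" if "1 \<le> i" "i \<le> N" for i using hm_pos[OF smm] that by auto
  have hppos: "hp Wp N b j > 0" if "1 \<le> j" "j \<le> b" "b \<le> N" for b j using hp_pos[OF smp] that by auto
  have hple: "hp Wp N b j \<le> 1" if "1 \<le> j" "j \<le> b" "b \<le> N" for b j using hp_le1[OF Wp(4)] that by auto
  have ba: "alpha < beta"
  proof (rule ccontr)
    assume "\<not> alpha < beta"
    hence ba: "beta \<le> alpha" by simp
    define c where "c = (2::real) powr (1/beta)"
    define d where "d = (2::real) powr (1/alpha)"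
    have cd: "d \<le> c" unfolding c_def d_def using ba alpha beta
      by (intro powr_mono) (auto simp: divide_simps)
    have d1: "d > 1" unfolding d_def using powr_less_mono[of 0 "1/alpha" 2] alpha by simp
    define vm where "vm = (\<lambda>i. c * wm i)"
    define vp where "vp = (\<lambda>j. d * wp j)"
    have cpos: "c > 0" "d > 0" by (auto simp: c_def d_def)
    have F2: "feasible alpha beta lam Wm Wp N nms nps vm vp"
      unfolding feasible_def
    proof (intro conjI)
      have "(\<Sum>i=1..nms. hm Wm N i * U alpha beta lam (vm i)) = 2 * (\<Sum>i=1..nms. hm Wm N i * U alpha beta lam (wm i))"
        unfolding sum_distrib_left
        by (rule sum.cong) (use wmi beta in \<open>auto simp: vm_def c_def U_scale_neg\<close>)
      moreover have "(\<Sum>j=1..nps. hp Wp N nps j * U alpha beta lam (vp j)) = 2 * (\<Sum>j=1..nps. hp Wp N nps j * U alpha beta lam (wp j))"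
        unfolding sum_distrib_left
        by (rule sum.cong) (use wpj alpha in \<open>auto simp: vp_def d_def U_scale_pos\<close>)
      ultimately show "0 \<le> (\<Sum>i=1..nms. hm Wm N i * U alpha beta lam (vm i)) + (\<Sum>j=1..nps. hp Wp N nps j * U alpha beta lam (vp j))"
        using Fwd by linarith
      show "1 \<le> nps \<longrightarrow> 0 \<le> vp 1" using Fwd cpos by (simp add: vp_def)
      show "\<forall>j\<in>{1..<nps}. vp j \<le> vp (j + 1)" using Fwd cpos by (auto simp: vp_def)
      show "\<forall>i\<in>{1..<nms}. vm i \<le> vm (i + 1)" using Fwd cpos by (auto simp: vm_def)
      show "1 \<le> nms \<longrightarrow> vm nms \<le> 0" using Fwd cpos by (simp add: vm_def mult_nonneg_nonpos)
    qed
    define A where "A = (\<Sum>i=1..nms. - wm i)"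
    define B where "B = (\<Sum>j=1..nps. wp j)"
    have A: "A \<ge> 0" unfolding A_def by (rule sum_nonneg) (use wmi in auto)
    have OAB: "Ov = A - B" by (simp add: Ov_def objective_def A_def B_def)
    have "objective nms nps vm vp = c * A - d * B"
      by (simp add: objective_def vm_def vp_def A_def B_def sum_distrib_left)
    also have "\<dots> \<ge> d * A - d * B" using cd A by (simp add: mult_right_mono)
    finally have "objective nms nps vm vp \<ge> d * Ov" by (simp add: OAB right_diff_distrib)
    moreover have "d * Ov > Ov" using d1 Ov by simp
    ultimately show False using maxw[OF F2] by simp
  qed
  have partA: "\<forall>j\<in>{1..nps}. wp j \<noteq> 0"
  proof (rule ccontr)
    assume "\<not> (\<forall>j\<in>{1..nps}. wp j \<noteq> 0)"
    then obtain j where j: "j \<in> {1..nps}" "wp j = 0" by auto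
    have z: "wp 1 = 0" using wpj[of 1] chain_mono[of nps wp 1 j] Fwd j nps by auto
    have p1: "hm Wm N 1 > 0" using hmpos[of 1] N by simp
    have p2: "hp Wp N nps 1 > 0" using hppos[of 1 nps] nps sum by simp
    have p3: "\<forall>i\<in>{1..nms}. hm Wm N i \<ge> 0" using hmpos sum by (auto intro: less_imp_le)
    have p4: "\<forall>j\<in>{1..nps}. hp Wp N nps j \<ge> 0" using hppos sum by (auto intro: less_imp_le)
    obtain vm vp where "feasible alpha beta lam Wm Wp N nms nps vm vp" "objective nms nps vm vp > Ov"
      using improve[OF alpha(1) ba beta(2) lam nms nps p1 p2 p3 p4 Fw z] unfolding Ov_def by blast
    then show False using maxw by fastforce
  qed
  have partB: "\<forall>i\<in>{1..nms}. wm i \<noteq> 0"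
  proof (rule ccontr)
    assume "\<not> (\<forall>i\<in>{1..nms}. wm i \<noteq> 0)"
    then obtain i where i: "i \<in> {1..nms}" "wm i = 0" by auto
    have z: "wm nms = 0" using wmi[of i] wmi[of nms] i nms by auto
    have Bnn: "(\<Sum>j=1..nps. wp j) \<ge> 0" by (rule sum_nonneg) (use wpj in auto)
    have nms2: "nms \<ge> 2"
    proof (rule ccontr)
      assume "\<not> nms \<ge> 2" hence "nms = 1" using nms by simp
      hence "Ov = - (\<Sum>j=1..nps. wp j)" using z by (simp add: Ov_def objective_def)
      then show False using Bnn Ov by simp
    qed
    define a where "a = nms - 1"
    define b where "b = nps + 1"
    have nmsa: "nms = Suc a" using nms2 by (simp add: a_def)
    have a: "a \<ge> 1" and b: "b \<ge> 1" and abN: "a + b = N" using nms2 sum by (auto simp: a_def b_def)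
    define vp where "vp = (\<lambda>j. if j \<le> 1 then 0 else wp (j - 1))"
    have sumb: "(\<Sum>j=1..b. f j) = f 1 + (\<Sum>j=1..nps. f (Suc j))" for f :: "nat \<Rightarrow> real"
    proof -
      have "(\<Sum>j=1..b. f j) = f 1 + (\<Sum>j=Suc 1..Suc nps. f j)"
        unfolding b_def using sum.atLeast_Suc_atMost[of 1 "Suc nps" f] by simp
      also have "(\<Sum>j=Suc 1..Suc nps. f j) = (\<Sum>j=1..nps. f (Suc j))"
        by (rule sum.shift_bounds_cl_Suc_ivl)
      finally show ?thesis .
    qed
    have suma: "(\<Sum>i=1..nms. f i) = (\<Sum>i=1..a. f i) + f nms" for f :: "nat \<Rightarrow> real"
      unfolding nmsa using a by simp
    have hpsh: "hp Wp N b (Suc j) = hp Wp N nps j" for j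
      by (simp add: hp_def b_def)
    have F2: "feasible alpha beta lam Wm Wp N a b wm vp"
      unfolding feasible_def
    proof (intro conjI)
      have "(\<Sum>i=1..a. hm Wm N i * U alpha beta lam (wm i)) = (\<Sum>i=1..nms. hm Wm N i * U alpha beta lam (wm i))"
        using suma z by (simp add: U_nonneg)
      moreover have "(\<Sum>j=1..b. hp Wp N b j * U alpha beta lam (vp j)) = (\<Sum>j=1..nps. hp Wp N nps j * U alpha beta lam (wp j))"
        using sumb by (simp add: vp_def U_nonneg hpsh)
      ultimately show "0 \<le> (\<Sum>i=1..a. hm Wm N i * U alpha beta lam (wm i)) + (\<Sum>j=1..b. hp Wp N b j * U alpha beta lam (vp j))"
        using Fwd by linarith
      show "1 \<le> b \<longrightarrow> 0 \<le> vp 1" by (simp add: vp_def)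
      show "\<forall>j\<in>{1..<b}. vp j \<le> vp (j + 1)"
      proof
        fix j assume j: "j \<in> {1..<b}"
        show "vp j \<le> vp (j + 1)"
        proof (cases "j = 1")
          case True then show ?thesis using wpj[of 1] nps by (simp add: vp_def)
        next
          case False
          hence "j - 1 \<in> {1..<nps}" using j by (auto simp: b_def)
          hence "wp (j-1) \<le> wp (j - 1 + 1)" using Fwd by blast
          then show ?thesis using False j by (simp add: vp_def)
        qed
      qed
      show "\<forall>i\<in>{1..<a}. wm i \<le> wm (i + 1)" using Fwd by (auto simp: a_def)
      show "1 \<le> a \<longrightarrow> wm a \<le> 0" using wmi[of a] a nmsa by simp
    qed
    have objeq: "objective a b wm vp = Ov"
    proof -
      have "(\<Sum>i=1..nms. - wm i) = (\<Sum>i=1..a. - wm i)" using suma[of "\<lambda>i. - wm i"] z by simp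
      moreover have "(\<Sum>j=1..b. vp j) = (\<Sum>j=1..nps. wp j)" using sumb[of vp] by (simp add: vp_def)
      ultimately show ?thesis by (simp add: Ov_def objective_def)
    qed
    have bN: "b \<le> N" using abN by simp
    obtain vm' vp' where F3: "feasible alpha beta lam Wm Wp N a b vm' vp'" and gt: "objective a b vm' vp' > Ov"
    proof -
      have p1: "hm Wm N 1 > 0" using hmpos[of 1] N by simp
      have p2: "hp Wp N b 1 > 0" using hppos[of 1 b] b bN by simp
      have p3: "\<forall>i\<in>{1..a}. hm Wm N i \<ge> 0" using hmpos abN by (auto intro: less_imp_le)
      have p4: "\<forall>j\<in>{1..b}. hp Wp N b j \<ge> 0" using hppos abN by (auto intro: less_imp_le)
      have z: "vp 1 = 0" by (simp add: vp_def)
      show ?thesis using that improve[OF alpha(1) ba beta(2) lam a b p1 p2 p3 p4 F2 z] objeq by auto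
    qed
    have bd: "bdd_above {objective a b vm vp | vm vp. feasible alpha beta lam Wm Wp N a b vm vp}"
    proof -
      have p1: "hm Wm N 1 > 0" using hmpos[of 1] N by simp
      have p3: "\<forall>i\<in>{1..a}. hm Wm N i \<ge> 0" using hmpos abN by (auto intro: less_imp_le)
      have p4: "\<forall>j\<in>{1..b}. hp Wp N b j \<ge> 0" using hppos abN by (auto intro: less_imp_le)
      have p5: "\<forall>j\<in>{1..b}. hp Wp N b j \<le> 1" using hple abN by auto
      show ?thesis by (rule bdd[OF alpha(1) ba lam a b _ p1 p3 p4 p5]) (use abN in simp)
    qed
    have "objective a b vm' vp' \<le> Phi alpha beta lam Wm Wp N a b"
      unfolding Phi_def using a b by (auto intro!: cSup_upper bd F3)
    moreover have "Phi alpha beta lam Wm Wp N a b \<le> Ov" using glob abN PhiO by auto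
    ultimately show False using gt by simp
  qed
  show ?thesis using partA partB by blast
qed

end
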